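(* In the setting of the context, suppose $\operatorname{rank}(\bar B_i)=n_i$ for all $i\in\{1,\dots,N-1\}$, $\operatorname{int}(\mathcal Z_N)\neq\emptyset$ (interior in $\mathbb{R}^{n_N}$), and $\|D\|<r_{\mathbb R}(A)$. Then the malfunctioning network $\dot X=(A+D)X+Bu+Cw_N$ is resiliently stabilizable.
   Context: Network of $N$ linear subsystems $\dot x_i=A_ix_i+\bar B_i\bar u_i+\sum_{k\in\mathcal N_i}D_{i,k}x_k$, $x_i\in\mathbb{R}^{n_i}$, $\bar u_i(t)\in\bar{\mathcal U}_i=[-1,1]^{m_i}$, $\mathcal N_i\subseteq\{1,\dots,N\}\setminus\{i\}$; $n_\Sigma=\sum n_i$, $X=(x_1,\dots,x_N)$, $A=\mathrm{diag}(A_1,\dots,A_N)$, $D=(D_{i,j})$ block matrix with zero diagonal blocks and $D_{i,k}=0$ for $k\notin\mathcal N_i$, $D\ne0$. Subsystem $N$ has lost control of $p_N\in\{1,\dots,m_N\}$ actuators: $\bar B_N$ is split into $B_N\in\mathbb{R}^{n_N\times(m_N-p_N)}$ and $C_N\in\mathbb{R}^{n_N\times p_N}$, $\mathcal U_N=[-1,1]^{m_N-p_N}$, $\mathcal W_N=[-1,1]^{p_N}$, so $\dot x_N=A_Nx_N+B_Nu_N+C_Nw_N+\sum_{k}D_{N,k}x_k$. The malfunctioning network is $\dot X=(A+D)X+Bu+Cw_N$ with $B=\mathrm{diag}(\bar B_1,\dots,\bar B_{N-1},B_N)$, $C=\begin{pmatrix}0\\C_N\end{pmatrix}$, $u(t)\in\mathcal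 U=\bar{\mathcal U}_1\times\cdots\times\bar{\mathcal U}_{N-1}\times\mathcal U_N$, $w_N(t)\in\mathcal W_N$. $\mathcal Z_N:=B_N\mathcal U_N\ominus(-C_N\mathcal W_N)=\{z\in\mathbb{R}^{n_N}: z-C_Nw\in B_N\mathcal U_N\ \forall w\in\mathcal W_N\}$. $r_{\mathbb R}(A)=\inf\{\|D'\|: D'\text{ real}, A+D'\text{ has an eigenvalue with positive real part}\}$. A tuple $(M,G,H,\mathcal U,\mathcal W)$ (system $\dot x=Mx+Gu+Hw$) is resiliently stabilizable if for every $x(0)$ and every $w:[0,\infty)\to\mathcal W$ there exist $T\ge0$ and $u:[0,\infty)\to\mathcal U$, with $u(t)$ depending only on $w(t)$, such that the solution exists, is unique and $x(T)=0$. The malfunctioning network is resiliently stabilizable if $(A+D,B,C,\mathcal U,\mathcal W_N)$ is. *)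

theory Defs
  imports "HOL-Analysis.Analysis"
begin

definition cube :: "(real^'a) set" where
  "cube = {v. \<forall>j. \<bar>v $ j\<bar> \<le> 1}"

definition cmat :: "real^'n^'m \<Rightarrow> complex^'n^'m" where
  "cmat M = (\<chi> i j. complex_of_real (M $ i $ j))"

definition has_pos_re_eigenvalue :: "real^'n^'n \<Rightarrow> bool" where
  "has_pos_re_eigenvalue M \<longleftrightarrow>
     (\<exists>(lam::complex) v. v \<noteq> 0 \<and> cmat M *v v = lam *s v \<and> Re lam > 0)"

definition mnorm :: "real^'n^'m \<Rightarrow> real" where
  "mnorm M = onorm (\<lambda>x. M *v x)"

definition real_stab_radius :: "real^'n^'n \<Rightarrow> real" where
  "real_stab_radius A = Inf {mnorm D' | D'. has_pos_re_eigenvalue (A + D')}"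

text \<open>x is a (Caratheodory, integral-equation) solution on [0,\<infinity>) of
  x' = M x + G u + H w with x(0) = x0.\<close>
definition ode_solution ::
  "real^'n^'n \<Rightarrow> real^'m^'n \<Rightarrow> real^'p^'n \<Rightarrow> (real \<Rightarrow> real^'m) \<Rightarrow> (real \<Rightarrow> real^'p)
   \<Rightarrow> real^'n \<Rightarrow> (real \<Rightarrow> real^'n) \<Rightarrow> bool" where
  "ode_solution M G H u w x0 x \<longleftrightarrow>
     x 0 = x0 \<and>
     (\<forall>t\<ge>0. ((\<lambda>s. M *v x s + G *v u s + H *v w s) has_integral (x t - x0)) {0..t})"

text \<open>Resilient stabilizability of (M,G,H,U,W): for every x(0) there is a rule
  u(t) = kappa t (w(t)) (so u(t) depends on the disturbance only through w(t))
  such that for every w:[0,\<infinity>) \<rightarrow> W there is T \<ge> 0 with a unique solution reaching 0 at T.\<close>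
definition resiliently_stabilizable ::
  "real^'n^'n \<Rightarrow> real^'m^'n \<Rightarrow> real^'p^'n \<Rightarrow> (real^'m) set \<Rightarrow> (real^'p) set \<Rightarrow> bool" where
  "resiliently_stabilizable M G H U W \<longleftrightarrow>
     (\<forall>x0. \<exists>kappa :: real \<Rightarrow> real^'p \<Rightarrow> real^'m.
        (\<forall>t\<ge>0. \<forall>v\<in>W. kappa t v \<in> U) \<and>
        (\<forall>w. (\<forall>t\<ge>0. w t \<in> W) \<longrightarrow>
           (\<exists>T\<ge>0. \<exists>x. ode_solution M G H (\<lambda>t. kappa t (w t)) w x0 x \<and>
                 (\<forall>y. ode_solution M G H (\<lambda>t. kappa t (w t)) w x0 y \<longrightarrow> (\<forall>t\<ge>0. y t = x t)) \<and>
                 x T = 0)))"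

text \<open>Block subspace of the network state space corresponding to subsystem i
  (the copy of R^{n_i} inside R^{n_Sigma}).\<close>
definition block_subspace :: "('n \<Rightarrow> nat) \<Rightarrow> nat \<Rightarrow> (real^'n) set" where
  "block_subspace blk i = {z. \<forall>k. blk k \<noteq> i \<longrightarrow> z $ k = 0}"

text \<open>Z_N = B_N U_N \<ominus> (-C_N W_N), embedded in block N of the state space.
  Healthy inputs of subsystem N are the input coordinates j with blkm j = N.\<close>
definition Z_set :: "real^'m^'n \<Rightarrow> real^'p^'n \<Rightarrow> ('m \<Rightarrow> nat) \<Rightarrow> nat \<Rightarrow> (real^'n) set" where
  "Z_set B C blkm N =
     {z. \<forall>w\<in>cube. \<exists>u\<in>cube. (\<forall>j. blkm j \<noteq> N \<longrightarrow> u $ j = 0) \<and> z - C *v w = B *v u}"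

end

theory Submission
  imports Defs "Jordan_Normal_Form.Schur_Decomposition"
begin

no_notation Matrix.vec_index (infixl "$" 100)

lemma cubic_bound: "0 \<le> r \<Longrightarrow> r \<le> 1 \<Longrightarrow> \<bar>6 * r\<^sup>2 - 6 * r\<bar> \<le> (3/2::real)"
proof -
  assume "0 \<le> r" "r \<le> 1"
  have "6 * r\<^sup>2 - 6 * r \<le> 0" using \<open>0 \<le> r\<close> \<open>r \<le> 1\<close> by (simp add: power2_eq_square mult_left_le)
  moreover have "6 * r\<^sup>2 - 6 * r + 3/2 = 6 * (r - 1/2)\<^sup>2" by (simp add: power2_eq_square algebra_simps)
  moreover have "0 \<le> 6 * (r - 1/2)\<^sup>2" by simp
  ultimately show ?thesis by linarith
qed

lemma steer_scalar:
  fixes lam a1 :: complex and t1 \<delta> :: real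
  assumes lam: "Re lam \<le> 0" and dl: "\<delta> > 0"
  shows "\<exists>b vb T2. T2 > 0 \<and> b t1 = a1 \<and> vb t1 = 0 \<and>
     (\<forall>t\<ge>t1. ((\<lambda>s. lam * b s + vb s) has_integral (b t - a1)) {t1..t}) \<and>
     (\<forall>s. cmod (vb s) \<le> \<delta>) \<and> (\<forall>t \<ge> t1 + T2. b t = 0)"
proof -
  define T2 where "T2 = 3 * cmod a1 / (2 * \<delta>) + 1"
  have T2: "T2 > 0" unfolding T2_def using dl by (simp add: add_nonneg_pos)
  define c where "c = exp (- (t1 *\<^sub>R lam))"
  define phi where "phi r = 1 - 3 * r\<^sup>2 + 2 * r ^ 3" for r :: real
  define dphi where "dphi r = 6 * r\<^sup>2 - 6 * r" for r :: real
  define B where "B x = exp (x *\<^sub>R lam) * (c * a1 * of_real (phi ((x - t1) / T2)))" for x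
  define VB where "VB x = exp (x *\<^sub>R lam) * (c * a1 * of_real (dphi ((x - t1) / T2) / T2))" for x
  define b where "b x = (if x \<le> t1 + T2 then B x else 0)" for x
  define vb where "vb x = (if t1 \<le> x \<and> x \<le> t1 + T2 then VB x else 0)" for x
  have Bt1: "B t1 = a1" by (simp add: B_def c_def phi_def mult.assoc[symmetric] exp_add[symmetric])
  have BT: "B (t1 + T2) = 0" using T2 by (simp add: B_def phi_def)
  have VBT: "VB (t1 + T2) = 0" using T2 by (simp add: VB_def dphi_def)
  have derB: "(B has_vector_derivative (lam * B x + VB x)) (at x)" for x
  proof -
    have dp: "((\<lambda>x. phi ((x - t1) / T2)) has_field_derivative (dphi ((x - t1) / T2) / T2)) (at x)"
    proof -
      have g: "((\<lambda>x. (x - t1) / T2) has_real_derivative 1 / T2) (at x)"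
        using T2 by (auto intro!: derivative_eq_intros)
      have f: "(phi has_real_derivative dphi r) (at r)" for r
        unfolding phi_def dphi_def
        by (auto intro!: derivative_eq_intros simp: power2_eq_square algebra_simps)
      from DERIV_chain[OF f g] show ?thesis by (simp add: o_def)
    qed
    have d1: "((\<lambda>t. exp (t *\<^sub>R lam)) has_vector_derivative exp (x *\<^sub>R lam) * lam) (at x)"
      by (rule exp_scaleR_has_vector_derivative_right)
    have d2: "((\<lambda>x. c * a1 * of_real (phi ((x - t1) / T2))) has_vector_derivative (c * a1 * of_real (dphi ((x - t1) / T2) / T2))) (at x)"
      by (intro has_vector_derivative_mult_right has_vector_derivative_of_real dp)
    from has_vector_derivative_mult[OF d1 d2] show ?thesis
      unfolding B_def[abs_def] VB_def by (simp add: algebra_simps)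
  qed
  have intB: "((\<lambda>s. lam * B s + VB s) has_integral (B t - B t1)) {t1..t}" if "t1 \<le> t" for t
    using that by (intro fundamental_theorem_of_calculus) (auto intro: has_vector_derivative_at_within[OF derB])
  have main: "((\<lambda>s. lam * b s + vb s) has_integral (b t - a1)) {t1..t}" if t: "t \<ge> t1" for t
  proof (cases "t \<le> t1 + T2")
    case True
    have "((\<lambda>s. lam * b s + vb s) has_integral (B t - B t1)) {t1..t}"
      by (rule has_integral_eq[OF _ intB[OF t]]) (use True in \<open>auto simp: b_def vb_def\<close>)
    then show ?thesis using True by (simp add: b_def Bt1)
  next
    case False
    have i1: "((\<lambda>s. lam * b s + vb s) has_integral (B (t1+T2) - B t1)) {t1..t1+T2}"
      by (rule has_integral_eq[OF _ intB]) (use T2 in \<open>auto simp: b_def vb_def\<close>)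
    have i2: "((\<lambda>s. lam * b s + vb s) has_integral 0) {t1+T2..t}"
      by (rule has_integral_is_0) (auto simp: b_def vb_def BT VBT)
    from has_integral_combine[OF _ _ i1 i2] False T2 show ?thesis
      by (simp add: b_def BT Bt1)
  qed
  have bound: "cmod (vb s) \<le> \<delta>" for s
  proof (cases "t1 \<le> s \<and> s \<le> t1 + T2")
    case True
    define r where "r = (s - t1) / T2"
    have r: "0 \<le> r" "r \<le> 1" using True T2 by (auto simp: r_def field_simps)
    have e1: "exp (s *\<^sub>R lam) * c = exp ((s - t1) *\<^sub>R lam)"
      by (simp add: c_def exp_add[symmetric] scaleR_diff_left)
    have "VB s = exp ((s - t1) *\<^sub>R lam) * a1 * of_real (dphi r / T2)"
      unfolding VB_def r_def e1[symmetric] by (simp only: mult.assoc)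
    then have "cmod (VB s) = cmod (exp ((s - t1) *\<^sub>R lam)) * cmod a1 * cmod (of_real (dphi r / T2))"
      by (simp only: norm_mult)
    also have "\<dots> = exp ((s - t1) * Re lam) * cmod a1 * (\<bar>dphi r\<bar> / T2)"
      using T2 by (simp del: of_real_divide add: norm_of_real)
    also have "\<dots> \<le> 1 * cmod a1 * ((3/2) / T2)"
    proof (intro mult_mono divide_right_mono)
      show "exp ((s - t1) * Re lam) \<le> 1" using True lam by (simp add: mult_nonneg_nonpos)
      show "\<bar>dphi r\<bar> \<le> 3/2" unfolding dphi_def by (rule cubic_bound[OF r])
    qed (use T2 in auto)
    also have "\<dots> \<le> \<delta>"
    proof -
      have "cmod a1 * (3/2) \<le> \<delta> * T2" using dl unfolding T2_def by (simp add: field_simps)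
      then show ?thesis using T2 by (simp add: field_simps)
    qed
    finally show ?thesis using True by (simp add: vb_def)
  qed (use dl in \<open>auto simp: vb_def\<close>)
  have "b t1 = a1" using T2 by (simp add: b_def Bt1)
  moreover have "vb t1 = 0" using T2 by (simp add: vb_def VB_def dphi_def)
  moreover have "\<forall>t \<ge> t1 + T2. b t = 0" by (simp add: b_def BT)
  ultimately show ?thesis using T2 main bound by blast
qed

lemma drive_ode:
  fixes lam a0 :: complex and g :: "real \<Rightarrow> complex"
  assumes g: "\<And>t. t \<ge> 0 \<Longrightarrow> continuous_on {0..t} g"
  shows "\<exists>a. a 0 = a0 \<and> (\<forall>t\<ge>0. ((\<lambda>s. lam * a s + g s) has_integral (a t - a0)) {0..t})"
proof -
  define h where "h s = exp (-(s *\<^sub>R lam)) * g s" for s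
  define a where "a t = exp (t *\<^sub>R lam) * (a0 + integral {0..t} h)" for t
  have a0: "a 0 = a0" by (simp add: a_def)
  have "((\<lambda>s. lam * a s + g s) has_integral (a t - a0)) {0..t}" if t: "t \<ge> 0" for t
  proof -
    have hc: "continuous_on {0..t} h" unfolding h_def
      by (intro continuous_intros g t)
    have "(a has_vector_derivative (lam * a x + g x)) (at x within {0..t})" if x: "x \<in> {0..t}" for x
    proof -
      have d1: "((\<lambda>t. exp (t *\<^sub>R lam)) has_vector_derivative exp (x *\<^sub>R lam) * lam) (at x within {0..t})"
        by (rule exp_scaleR_has_vector_derivative_right)
      have d2: "((\<lambda>u. a0 + integral {0..u} h) has_vector_derivative (0 + h x)) (at x within {0..t})"
        by (intro has_vector_derivative_add has_vector_derivative_const integral_has_vector_derivative hc x)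
      have e: "exp (x *\<^sub>R lam) * h x = g x"
        by (simp add: h_def mult.assoc[symmetric] exp_add[symmetric])
      from has_vector_derivative_mult[OF d1 d2] show ?thesis
        unfolding a_def[abs_def] using e by (simp add: algebra_simps)
    qed
    from fundamental_theorem_of_calculus[OF t this] show ?thesis by (simp add: a0)
  qed
  with a0 show ?thesis by blast
qed

lemma cont_from_int:
  fixes y :: "real \<Rightarrow> 'a::banach"
  assumes "\<forall>s\<in>{0..t}. (f has_integral (y s - yz)) {0..s}" and t: "t \<ge> 0"
  shows "continuous_on {0..t} y"
proof -
  have fi: "f integrable_on {0..t}" using assms by auto
  have eq: "y s = yz + integral {0..s} f" if "s \<in> {0..t}" for s
  proof -
    have "integral {0..s} f = y s - yz" using assms(1) that by (blast intro: integral_unique)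
    then show ?thesis by (simp add: algebra_simps)
  qed
  have "continuous_on {0..t} (\<lambda>s. yz + integral {0..s} f)"
    by (intro continuous_on_add continuous_on_const indefinite_integral_continuous_1 fi)
  then show ?thesis using continuous_on_cong eq by (metis (no_types, lifting))
qed

lemma tri_steer:
  fixes R :: "nat \<Rightarrow> nat \<Rightarrow> complex" and \<delta> :: real and y0 :: "nat \<Rightarrow> complex"
  assumes ut: "\<And>i j. j < i \<Longrightarrow> R i j = 0" and re: "\<And>i. i < n \<Longrightarrow> Re (R i i) \<le> 0"
    and dl: "\<delta> > 0"
  shows "k \<le> n \<Longrightarrow> \<exists>(y::real \<Rightarrow> nat \<Rightarrow> complex) (v::real \<Rightarrow> nat \<Rightarrow> complex) (T::real). T \<ge> 0 \<and> (\<forall>i\<in>{k..<n}. y 0 i = y0 i) \<and>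
    (\<forall>i\<in>{k..<n}. \<forall>t\<ge>0. ((\<lambda>s. (\<Sum>j\<in>{k..<n}. R i j * y s j) + v s i) has_integral (y t i - y 0 i)) {0..t}) \<and>
    (\<forall>s i. cmod (v s i) \<le> \<delta>) \<and> (\<forall>t\<ge>T. \<forall>i\<in>{k..<n}. y t i = 0)"
proof (induction k rule: inc_induct)
  case base
  show ?case
    apply (rule exI[where x="\<lambda>(s::real) (i::nat). (0::complex)"])
    apply (rule exI[where x="\<lambda>(s::real) (i::nat). (0::complex)"])
    apply (rule exI[where x="0::real"])
    using dl by auto
next
  case (step k)
  then obtain y' v' :: "real \<Rightarrow> nat \<Rightarrow> complex" and T1 :: real where T1: "T1 \<ge> 0" and y'0: "\<forall>i\<in>{Suc k..<n}. y' 0 i = y0 i"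
    and y'int: "\<forall>i\<in>{Suc k..<n}. \<forall>t\<ge>0. ((\<lambda>s. (\<Sum>j\<in>{Suc k..<n}. R i j * y' s j) + v' s i) has_integral (y' t i - y' 0 i)) {0..t}"
    and v'b: "\<forall>s i. cmod (v' s i) \<le> \<delta>" and y'z: "\<forall>t\<ge>T1. \<forall>i\<in>{Suc k..<n}. y' t i = 0"
    by blast
  define g where "g s = (\<Sum>j\<in>{Suc k..<n}. R k j * y' s j)" for s
  have gc: "continuous_on {0..t} g" if t: "t \<ge> 0" for t
  proof -
    have "continuous_on {0..t} (\<lambda>s. y' s j)" if j: "j \<in> {Suc k..<n}" for j
      by (rule cont_from_int[OF _ t, where f="\<lambda>s. (\<Sum>l\<in>{Suc k..<n}. R j l * y' s l) + v' s j" and yz="y' 0 j"]) (use y'int j in auto)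
    then show ?thesis unfolding g_def by (auto intro!: continuous_on_sum continuous_on_mult_left)
  qed
  obtain a :: "real \<Rightarrow> complex" where a0: "a 0 = y0 k" and aint: "\<forall>t\<ge>0. ((\<lambda>s. R k k * a s + g s) has_integral (a t - y0 k)) {0..t}"
    using drive_ode[of g "y0 k" "R k k", OF gc] by blast
  obtain b vb :: "real \<Rightarrow> complex" and T2 :: real where T2: "T2 > 0" and b1: "b T1 = a T1" and vb1: "vb T1 = 0"
    and bint: "\<forall>t\<ge>T1. ((\<lambda>s. R k k * b s + vb s) has_integral (b t - a T1)) {T1..t}"
    and vbb: "\<forall>s. cmod (vb s) \<le> \<delta>" and bz: "\<forall>t \<ge> T1 + T2. b t = 0"
    using steer_scalar[of "R k k" \<delta> T1 "a T1"] re step(2) dl by blast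
  define y where "y s i = (if i = k then (if s \<le> T1 then a s else b s) else y' s i)" for s i
  define v where "v s i = (if i = k then (if s \<le> T1 then 0 else vb s) else v' s i)" for s i
  have sumk: "(\<Sum>j\<in>{k..<n}. R k j * y s j) = R k k * y s k + g s" for s
    using step(2) by (simp add: sum.atLeast_Suc_lessThan g_def y_def)
  have gz: "g s = 0" if "s \<ge> T1" for s using y'z that by (simp add: g_def)
  have intk: "((\<lambda>s. (\<Sum>j\<in>{k..<n}. R k j * y s j) + v s k) has_integral (y t k - y 0 k)) {0..t}"
    if t: "t \<ge> 0" for t
  proof (cases "t \<le> T1")
    case True
    have e: "y t k - y 0 k = a t - y0 k" using True T1 by (simp add: y_def a0)
    show ?thesis unfolding e
      by (rule has_integral_eq[OF _ aint[rule_format, OF t]], simp only: sumk) (use True T1 in \<open>auto simp: y_def v_def\<close>)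
  next
    case False
    have i1: "((\<lambda>s. (\<Sum>j\<in>{k..<n}. R k j * y s j) + v s k) has_integral (a T1 - y0 k)) {0..T1}"
      by (rule has_integral_eq[OF _ aint[rule_format, OF T1]], simp only: sumk) (auto simp: y_def v_def)
    have i2: "((\<lambda>s. (\<Sum>j\<in>{k..<n}. R k j * y s j) + v s k) has_integral (b t - a T1)) {T1..t}"
      by (rule has_integral_eq[OF _ bint[rule_format]], simp only: sumk) (use False b1 vb1 in \<open>auto simp: y_def v_def gz\<close>)
    from has_integral_combine[OF T1 _ i1 i2] False T1 show ?thesis by (simp add: y_def a0)
  qed
  have inti: "((\<lambda>s. (\<Sum>j\<in>{k..<n}. R i j * y s j) + v s i) has_integral (y t i - y 0 i)) {0..t}"
    if i: "i \<in> {Suc k..<n}" and t: "t \<ge> 0" for i t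
  proof -
    have "(\<Sum>j\<in>{k..<n}. R i j * y s j) + v s i = (\<Sum>j\<in>{Suc k..<n}. R i j * y' s j) + v' s i" for s
      using step(2) i ut[of k i] by (simp add: sum.atLeast_Suc_lessThan y_def v_def)
    then show ?thesis using y'int i t by (simp add: y_def)
  qed
  show ?case
  proof (intro exI conjI)
    show "0 \<le> T1 + T2" using T1 T2 by simp
    show "\<forall>i\<in>{k..<n}. y 0 i = y0 i" using y'0 T1 a0 by (auto simp: y_def)
    show "\<forall>i\<in>{k..<n}. \<forall>t\<ge>0. ((\<lambda>s. (\<Sum>j\<in>{k..<n}. R i j * y s j) + v s i) has_integral (y t i - y 0 i)) {0..t}"
    proof (intro ballI allI impI)
      fix i t assume "i \<in> {k..<n}" "(0::real) \<le> t"
      then show "((\<lambda>s. (\<Sum>j\<in>{k..<n}. R i j * y s j) + v s i) has_integral (y t i - y 0 i)) {0..t}"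
        using intk inti by (cases "i = k") auto
    qed
    show "\<forall>s i. cmod (v s i) \<le> \<delta>" using v'b vbb dl by (simp add: v_def)
    show "\<forall>t\<ge>T1 + T2. \<forall>i\<in>{k..<n}. y t i = 0" using y'z bz T2 T1 by (auto simp: y_def)
  qed
qed

lemma power_has_integral_0:
  assumes "(s::real) \<ge> 0"
  shows "((\<lambda>r. r ^ k) has_integral (s ^ Suc k / real (Suc k))) {0..s}"
proof -
  have "((\<lambda>r. r ^ Suc k / real (Suc k)) has_vector_derivative x ^ k) (at x within {0..s})" for x
  proof -
    have "((\<lambda>r. r ^ Suc k) has_real_derivative real (Suc k) * x ^ k) (at x)"
      using DERIV_pow[of "Suc k" x] by simp
    from DERIV_cdivide[OF this, of "real (Suc k)"]
    have "((\<lambda>r. r ^ Suc k / real (Suc k)) has_real_derivative x ^ k) (at x)"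
      by (simp del: of_nat_Suc)
    then show ?thesis
      unfolding has_real_derivative_iff_has_vector_derivative by (rule has_vector_derivative_at_within)
  qed
  from fundamental_theorem_of_calculus[OF assms this] show ?thesis by simp
qed

lemma gronwall_zero:
  fixes M :: "real^'n^'n" and d :: "real \<Rightarrow> real^'n"
  assumes int: "\<forall>t\<ge>0. ((\<lambda>s. M *v d s) has_integral d t) {0..t}"
  shows "\<forall>t\<ge>0. d t = 0"
proof (intro allI impI)
  fix t0 :: real assume t0: "t0 \<ge> 0"
  have cont: "continuous_on {0..t0} d"
    by (rule cont_from_int[where f="\<lambda>s. M *v d s" and yz=0, OF _ t0]) (use int in auto)
  have "bounded (d ` {0..t0})"
    by (rule compact_imp_bounded, rule compact_continuous_image[OF cont compact_Icc])
  then obtain K where K: "\<And>s. s \<in> {0..t0} \<Longrightarrow> norm (d s) \<le> K" unfolding bounded_iff by blast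
  obtain L where L: "L > 0" "\<And>x. norm (M *v x) \<le> norm x * L"
    using bounded_linear.pos_bounded[OF matrix_vector_mul_bounded_linear[of M]] by blast
  have ind: "\<forall>s\<in>{0..t0}. norm (d s) \<le> K * (inverse (fact k) * (L * s) ^ k)" for k
  proof (induction k)
    case 0
    then show ?case using K by simp
  next
    case (Suc k)
    show ?case
    proof
      fix s assume s: "s \<in> {0..t0}"
      have s0: "s \<ge> 0" using s by simp
      have ds: "d s = integral {0..s} (\<lambda>r. M *v d r)" by (rule integral_unique[symmetric]) (use int s0 in blast)
      have fi: "(\<lambda>r. M *v d r) integrable_on {0..s}" using int s0 by blast
      define c where "c = L * K * inverse (fact k) * L ^ k"
      have gi: "((\<lambda>r. c * r ^ k) has_integral (c * (s ^ Suc k / real (Suc k)))) {0..s}"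
        by (rule has_integral_mult_right[OF power_has_integral_0[OF s0]])
      have bnd: "norm (M *v d r) \<le> c * r ^ k" if r: "r \<in> {0..s}" for r
      proof -
        have "r \<in> {0..t0}" using r s by auto
        then have "norm (d r) \<le> K * (inverse (fact k) * (L * r) ^ k)" using Suc.IH by blast
        then have "norm (d r) * L \<le> K * (inverse (fact k) * (L * r) ^ k) * L"
          using L(1) by (simp add: mult_right_mono)
        also have "\<dots> = c * r ^ k" by (simp add: c_def power_mult_distrib algebra_simps)
        finally show ?thesis using L(2)[of "d r"] by linarith
      qed
      have "norm (d s) \<le> integral {0..s} (\<lambda>r. c * r ^ k)"
        unfolding ds by (rule integral_norm_bound_integral[OF fi has_integral_integrable[OF gi] bnd])
      also have "\<dots> = c * (s ^ Suc k / real (Suc k))" using gi by (rule integral_unique)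
      also have "\<dots> = K * (inverse (fact (Suc k)) * (L * s) ^ Suc k)"
        by (simp add: c_def power_mult_distrib field_simps)
      finally show "norm (d s) \<le> K * (inverse (fact (Suc k)) * (L * s) ^ Suc k)" .
    qed
  qed
  have lim: "(\<lambda>k. K * (inverse (fact k) * (L * t0) ^ k)) \<longlonglongrightarrow> K * 0"
    by (intro tendsto_mult_left summable_LIMSEQ_zero summable_exp)
  have "norm (d t0) \<le> K * 0"
    by (rule LIMSEQ_le_const[OF lim]) (use ind t0 in auto)
  then show "d t0 = 0" by simp
qed

lemma cube_neg: "u \<in> cube \<Longrightarrow> -u \<in> cube" by (simp add: cube_def)

lemma cube_mid: "u1 \<in> cube \<Longrightarrow> u2 \<in> cube \<Longrightarrow> (1/2) *\<^sub>R (u1 + u2) \<in> cube"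
proof -
  assume a: "u1 \<in> cube" "u2 \<in> cube"
  have "\<bar>(u1 $ j + u2 $ j) / 2\<bar> \<le> 1" for j
  proof -
    have "\<bar>u1 $ j\<bar> \<le> 1" "\<bar>u2 $ j\<bar> \<le> 1" using a by (auto simp: cube_def)
    then show ?thesis by (simp add: abs_le_iff)
  qed
  then show ?thesis by (simp add: cube_def)
qed

lemma mv_neg: "(A::real^'n^'m) *v (-x) = - (A *v x)"
  using linear_neg[OF matrix_vector_mul_linear] .

lemma Z_neg:
  fixes B :: "real^'m::finite^'n::finite" and C :: "real^'p::finite^'n"
  shows "z \<in> Z_set B C blkm N \<Longrightarrow> -z \<in> Z_set B C blkm N"
proof -
  assume z: "z \<in> Z_set B C blkm N"
  show "-z \<in> Z_set B C blkm N" unfolding Z_set_def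
  proof (intro CollectI ballI)
    fix w :: "real^'p" assume w: "w \<in> cube"
    then have "-w \<in> cube" by (rule cube_neg)
    then obtain u where u: "u \<in> cube" "\<forall>j. blkm j \<noteq> N \<longrightarrow> u $ j = 0" "z - C *v (-w) = B *v u"
      using z unfolding Z_set_def by blast
    show "\<exists>u\<in>cube. (\<forall>j. blkm j \<noteq> N \<longrightarrow> u $ j = 0) \<and> - z - C *v w = B *v u"
    proof (intro bexI conjI)
      show "-u \<in> cube" using u(1) by (rule cube_neg)
      show "\<forall>j. blkm j \<noteq> N \<longrightarrow> (-u) $ j = 0" using u(2) by simp
      show "- z - C *v w = B *v (-u)" using u(3) by (simp add: mv_neg algebra_simps)
    qed
  qed
qed

lemma Z_mid:
  fixes B :: "real^'m::finite^'n::finite" and C :: "real^'p::finite^'n"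
  shows "z1 \<in> Z_set B C blkm N \<Longrightarrow> z2 \<in> Z_set B C blkm N \<Longrightarrow> (1/2) *\<^sub>R (z1 + z2) \<in> Z_set B C blkm N"
proof -
  assume z: "z1 \<in> Z_set B C blkm N" "z2 \<in> Z_set B C blkm N"
  show ?thesis unfolding Z_set_def
  proof (intro CollectI ballI)
    fix w :: "real^'p" assume w: "w \<in> cube"
    obtain u1 where u1: "u1 \<in> cube" "\<forall>j. blkm j \<noteq> N \<longrightarrow> u1 $ j = 0" "z1 - C *v w = B *v u1"
      using z(1) w unfolding Z_set_def by blast
    obtain u2 where u2: "u2 \<in> cube" "\<forall>j. blkm j \<noteq> N \<longrightarrow> u2 $ j = 0" "z2 - C *v w = B *v u2"
      using z(2) w unfolding Z_set_def by blast
    show "\<exists>u\<in>cube. (\<forall>j. blkm j \<noteq> N \<longrightarrow> u $ j = 0) \<and> (1/2) *\<^sub>R (z1 + z2) - C *v w = B *v u"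
    proof (intro bexI conjI)
      show "(1/2) *\<^sub>R (u1 + u2) \<in> cube" using u1(1) u2(1) by (rule cube_mid)
      show "\<forall>j. blkm j \<noteq> N \<longrightarrow> ((1/2) *\<^sub>R (u1 + u2)) $ j = 0" using u1(2) u2(2) by simp
      have "B *v ((1/2) *\<^sub>R (u1 + u2)) = (1/2) *\<^sub>R (B *v u1 + B *v u2)"
        by (simp add: matrix_vector_mult_scaleR matrix_vector_right_distrib)
      also have "\<dots> = (1/2) *\<^sub>R (z1 - C *v w + (z2 - C *v w))" using u1(3) u2(3) by simp
      also have "\<dots> = (1/2) *\<^sub>R (z1 + z2) - C *v w" by (simp add: Finite_Cartesian_Product.vec_eq_iff field_simps)
      finally show "(1/2) *\<^sub>R (z1 + z2) - C *v w = B *v ((1/2) *\<^sub>R (u1 + u2))" by simp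
    qed
  qed
qed

lemma norm_le_card:
  fixes h :: "real^'n"
  assumes "\<forall>a. \<bar>h $ a\<bar> \<le> r"
  shows "norm h \<le> real CARD('n) * r"
proof -
  have "norm h \<le> (\<Sum>a\<in>UNIV. \<bar>h $ a\<bar>)" by (rule norm_le_l1_cart)
  also have "\<dots> \<le> (\<Sum>a\<in>(UNIV::'n set). r)" by (rule sum_mono) (use assms in auto)
  also have "\<dots> = real CARD('n) * r" by simp
  finally show ?thesis .
qed

lemma Z_nbhd:
  fixes B :: "real^'m::finite^'n::finite" and C :: "real^'p::finite^'n"
  assumes Z_int: "(top_of_set (block_subspace blk N)) interior_of (Z_set B C blkm N) \<noteq> {}"
  shows "\<exists>r>0. \<forall>h\<in>block_subspace blk N. (\<forall>a. \<bar>h $ a\<bar> \<le> r) \<longrightarrow> h \<in> Z_set B C blkm N"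
proof -
  let ?S = "block_subspace blk N" and ?Z = "Z_set B C blkm N"
  obtain z0 T where T: "openin (top_of_set ?S) T" "z0 \<in> T" "T \<subseteq> ?Z"
    using Z_int unfolding interior_of_def by blast
  then obtain U where U: "open U" "T = ?S \<inter> U" unfolding openin_open by blast
  then have z0S: "z0 \<in> ?S" and z0U: "z0 \<in> U" using T by auto
  obtain \<rho> where rho: "\<rho> > 0" "ball z0 \<rho> \<subseteq> U" using U(1) z0U open_contains_ball by blast
  define r where "r = \<rho> / (4 * real CARD('n))"
  have r: "r > 0" using rho by (simp add: r_def zero_less_card_finite)
  have "h \<in> ?Z" if h: "h \<in> ?S" "\<forall>a. \<bar>h $ a\<bar> \<le> r" for h
  proof -
    have "norm h \<le> real CARD('n) * r" by (rule norm_le_card[OF h(2)])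
    also have "\<dots> = \<rho> / 4" by (simp add: r_def)
    finally have nh: "norm h \<le> \<rho> / 4" .
    have "z0 + 2 *\<^sub>R h \<in> ?S" using z0S h(1) by (simp add: block_subspace_def)
    moreover have "z0 + 2 *\<^sub>R h \<in> ball z0 \<rho>" using nh rho(1) by (simp add: dist_norm)
    ultimately have a: "z0 + 2 *\<^sub>R h \<in> ?Z" using rho(2) U(2) T(3) by blast
    have b: "-z0 \<in> ?Z" using T z0U by (intro Z_neg) blast
    from Z_mid[OF a b] show ?thesis by (simp add: algebra_simps)
  qed
  with r show ?thesis by blast
qed

lemma span_image_repr:
  fixes f :: "'j \<Rightarrow> 'v::real_vector"
  assumes "x \<in> span (f ` J)" and fin: "finite J"
  shows "\<exists>c. x = (\<Sum>j\<in>J. c j *\<^sub>R f j)"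
  using assms(1)
proof (induction rule: span_induct_alt)
  case base
  show ?case by (rule exI[of _ "\<lambda>_. 0"]) simp
next
  case (step c x y)
  from step(1) obtain j0 where j0: "j0 \<in> J" "x = f j0" by blast
  from step(2) obtain c' where c': "y = (\<Sum>j\<in>J. c' j *\<^sub>R f j)" by blast
  have "c *\<^sub>R x + y = (\<Sum>j\<in>J. (c' j + (if j = j0 then c else 0)) *\<^sub>R f j)"
    using fin j0 by (simp add: c' scaleR_add_left sum.distrib if_distrib[of "\<lambda>a. a *\<^sub>R f _"] sum.delta' cong: if_cong)
  then show ?case by (rule exI[of _ "\<lambda>j. c' j + (if j = j0 then c else 0)"])
qed

lemma block_repr:
  fixes h :: "real^'n"
  assumes "h \<in> block_subspace blk i"
  shows "h = (\<Sum>k\<in>{k. blk k = i}. h $ k *\<^sub>R axis k 1)"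
proof -
  have "(\<Sum>k\<in>{k. blk k = i}. h $ k *\<^sub>R axis k 1) $ a = h $ a" for a
    using assms by (auto simp: axis_def block_subspace_def if_distrib[of "\<lambda>x. _ * x"] sum.delta cong: if_cong)
  then show ?thesis by (simp add: Finite_Cartesian_Product.vec_eq_iff)
qed

lemma col_nbhd:
  fixes B :: "real^'m::finite^'n::finite" and blk :: "'n \<Rightarrow> nat" and blkm :: "'m \<Rightarrow> nat"
  assumes B_diag: "\<forall>i j. blk i \<noteq> blkm j \<longrightarrow> B $ i $ j = 0"
    and rk: "dim {column j B | j. blkm j = i} = card {k. blk k = i}"
  shows "\<exists>r>0. \<forall>h\<in>block_subspace blk i. (\<forall>a. \<bar>h $ a\<bar> \<le> r) \<longrightarrow>
           (\<exists>u\<in>cube. (\<forall>j. blkm j \<noteq> i \<longrightarrow> u $ j = 0) \<and> B *v u = h)"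
proof -
  define J where "J = {j. blkm j = i}"
  define K where "K = {k. blk k = i}"
  define E where "E = (\<lambda>k. axis k (1::real)) ` K"
  have colsJ: "{column j B | j. blkm j = i} = (\<lambda>j. column j B) ` J" by (auto simp: J_def)
  have indE: "independent E"
    by (rule independent_mono[OF independent_Basis]) (auto simp: E_def)
  have cardE: "card E = card K"
    unfolding E_def by (rule card_image) (auto simp: inj_on_def axis_eq_axis)
  have bsE: "h \<in> span E" if "h \<in> block_subspace blk i" for h
  proof -
    have "h = (\<Sum>k\<in>K. h $ k *\<^sub>R axis k 1)" unfolding K_def by (rule block_repr[OF that])
    also have "\<dots> \<in> span E" by (intro span_sum span_scale span_base) (auto simp: E_def)
    finally show ?thesis .
  qed
  have colsE: "(\<lambda>j. column j B) ` J \<subseteq> span E"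
  proof
    fix x assume "x \<in> (\<lambda>j. column j B) ` J"
    then obtain j where j: "j \<in> J" "x = column j B" by blast
    have "x \<in> block_subspace blk i" using j B_diag by (auto simp: block_subspace_def column_def J_def)
    then show "x \<in> span E" by (rule bsE)
  qed
  have "dim (span E) \<le> dim ((\<lambda>j. column j B) ` J)"
    using rk colsJ cardE dim_span_eq_card_independent[OF indE] by (simp add: K_def)
  from dim_eq_span[OF colsE this] have spEq: "span ((\<lambda>j. column j B) ` J) = span E" by simp
  have "\<forall>k\<in>K. \<exists>c. axis k 1 = (\<Sum>j\<in>J. c j *\<^sub>R column j B)"
  proof
    fix k assume "k \<in> K"
    then have "axis k 1 \<in> span ((\<lambda>j. column j B) ` J)" unfolding spEq by (intro span_base) (auto simp: E_def)
    then show "\<exists>c. axis k 1 = (\<Sum>j\<in>J. c j *\<^sub>R column j B)" by (rule span_image_repr) simp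
  qed
  then obtain c where c: "\<And>k. k \<in> K \<Longrightarrow> axis k 1 = (\<Sum>j\<in>J. c k j *\<^sub>R column j B)" by metis
  define Kc where "Kc = (\<Sum>k\<in>K. \<Sum>j\<in>J. \<bar>c k j\<bar>) + 1"
  have Kc: "Kc \<ge> 1" unfolding Kc_def by (simp add: sum_nonneg)
  define r where "r = 1 / Kc"
  have r: "r > 0" using Kc by (simp add: r_def)
  have "\<exists>u\<in>cube. (\<forall>j. blkm j \<noteq> i \<longrightarrow> u $ j = 0) \<and> B *v u = h"
    if h: "h \<in> block_subspace blk i" "\<forall>a. \<bar>h $ a\<bar> \<le> r" for h
  proof -
    define u where "u = (\<chi> j. if blkm j = i then (\<Sum>k\<in>K. h $ k * c k j) else 0)"
    have "B *v u = (\<Sum>j\<in>UNIV. u $ j *\<^sub>R column j B)"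
      by (simp add: matrix_mult_sum scalar_mult_eq_scaleR)
    also have "\<dots> = (\<Sum>j\<in>UNIV. if j \<in> J then (\<Sum>k\<in>K. h $ k * c k j) *\<^sub>R column j B else 0)"
      by (rule sum.cong) (auto simp: u_def J_def)
    also have "\<dots> = (\<Sum>j\<in>J. (\<Sum>k\<in>K. h $ k * c k j) *\<^sub>R column j B)"
      by (simp add: sum.If_cases)
    also have "\<dots> = (\<Sum>j\<in>J. \<Sum>k\<in>K. h $ k *\<^sub>R (c k j *\<^sub>R column j B))"
      by (simp add: scaleR_sum_left)
    also have "\<dots> = (\<Sum>k\<in>K. \<Sum>j\<in>J. h $ k *\<^sub>R (c k j *\<^sub>R column j B))"
      by (rule sum.swap)
    also have "\<dots> = (\<Sum>k\<in>K. h $ k *\<^sub>R axis k 1)"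
      by (rule sum.cong) (auto simp: c scaleR_sum_right)
    also have "\<dots> = h" unfolding K_def by (rule block_repr[OF h(1), symmetric])
    finally have Bu: "B *v u = h" .
    have "\<bar>u $ j\<bar> \<le> 1" for j
    proof (cases "blkm j = i")
      case True
      then have jJ: "j \<in> J" by (simp add: J_def)
      have "\<bar>u $ j\<bar> = \<bar>\<Sum>k\<in>K. h $ k * c k j\<bar>" using True by (simp add: u_def)
      also have "\<dots> \<le> (\<Sum>k\<in>K. \<bar>h $ k * c k j\<bar>)" by (rule sum_abs)
      also have "\<dots> \<le> (\<Sum>k\<in>K. r * \<bar>c k j\<bar>)"
        by (rule sum_mono) (use h(2) in \<open>auto simp: abs_mult intro: mult_right_mono\<close>)
      also have "\<dots> = r * (\<Sum>k\<in>K. \<bar>c k j\<bar>)" by (simp add: sum_distrib_left)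
      also have "\<dots> \<le> r * (Kc - 1)"
      proof (rule mult_left_mono)
        have "(\<Sum>k\<in>K. \<bar>c k j\<bar>) \<le> (\<Sum>k\<in>K. \<Sum>j\<in>J. \<bar>c k j\<bar>)"
          by (rule sum_mono) (rule member_le_sum[OF jJ], auto)
        then show "(\<Sum>k\<in>K. \<bar>c k j\<bar>) \<le> Kc - 1" by (simp add: Kc_def)
      qed (use r in simp)
      also have "\<dots> \<le> 1" using Kc by (simp add: r_def field_simps)
      finally show ?thesis .
    qed (simp add: u_def)
    then have "u \<in> cube" by (simp add: cube_def)
    moreover have "\<forall>j. blkm j \<noteq> i \<longrightarrow> u $ j = 0" by (simp add: u_def)
    ultimately show ?thesis using Bu by blast
  qed
  with r show ?thesis by blast
qed

lemma admissible:
  fixes N :: nat and blk :: "'n::finite \<Rightarrow> nat" and blkm :: "'m::finite \<Rightarrow> nat"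
    and B :: "real^'m^'n" and C :: "real^'p::finite^'n"
  assumes blocks: "range blk = {1..N}"
    and inputs: "\<forall>j. blkm j \<in> {1..N}"
    and B_diag: "\<forall>i j. blk i \<noteq> blkm j \<longrightarrow> B $ i $ j = 0"
    and C_N: "\<forall>i j. blk i \<noteq> N \<longrightarrow> C $ i $ j = 0"
    and rank: "\<forall>i\<in>{1..<N}. dim {column j B | j. blkm j = i} = card {k. blk k = i}"
    and Z_int: "(top_of_set (block_subspace blk N)) interior_of (Z_set B C blkm N) \<noteq> {}"
  shows "\<exists>\<epsilon>>0. \<forall>z::real^'n. (\<forall>a. \<bar>z $ a\<bar> \<le> \<epsilon>) \<longrightarrow> (\<forall>w\<in>cube. \<exists>u\<in>cube. B *v u + C *v w = z)"
proof -
  obtain rN where rN: "rN > 0" "\<And>h. h \<in> block_subspace blk N \<Longrightarrow> (\<forall>a. \<bar>h $ a\<bar> \<le> rN) \<Longrightarrow> h \<in> Z_set B C blkm N"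
    using Z_nbhd[OF Z_int] by blast
  have "\<forall>i\<in>{1..<N}. \<exists>r>0. \<forall>h\<in>block_subspace blk i. (\<forall>a. \<bar>h $ a\<bar> \<le> r) \<longrightarrow>
           (\<exists>u\<in>cube. (\<forall>j. blkm j \<noteq> i \<longrightarrow> u $ j = 0) \<and> B *v u = h)"
    using col_nbhd[OF B_diag] rank by blast
  then obtain rr where rr: "\<And>i. i \<in> {1..<N} \<Longrightarrow> rr i > 0"
    "\<And>i h. i \<in> {1..<N} \<Longrightarrow> h \<in> block_subspace blk i \<Longrightarrow> (\<forall>a. \<bar>h $ a\<bar> \<le> rr i) \<Longrightarrow>
           (\<exists>u\<in>cube. (\<forall>j. blkm j \<noteq> i \<longrightarrow> u $ j = 0) \<and> B *v u = h)"
    by metis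
  define \<epsilon> where "\<epsilon> = Min (insert rN (rr ` {1..<N}))"
  have \<epsilon>: "\<epsilon> > 0" unfolding \<epsilon>_def using rN(1) rr(1) by (subst Min_gr_iff) auto
  have \<epsilon>N: "\<epsilon> \<le> rN" unfolding \<epsilon>_def by (rule Min_le) auto
  have \<epsilon>i: "\<epsilon> \<le> rr i" if "i \<in> {1..<N}" for i unfolding \<epsilon>_def by (rule Min_le) (use that in auto)
  have "\<exists>u\<in>cube. B *v u + C *v w = z" if z: "\<forall>a. \<bar>z $ a\<bar> \<le> \<epsilon>" and w: "w \<in> cube" for z w
  proof -
    define zb where "zb i = (\<chi> a. if blk a = i then z $ a else 0)" for i
    have zb_in: "zb i \<in> block_subspace blk i" for i by (simp add: zb_def block_subspace_def)
    have zb_le: "\<bar>zb i $ a\<bar> \<le> \<epsilon>" for i a using z \<epsilon> by (simp add: zb_def)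
    have "zb N \<in> Z_set B C blkm N"
      by (rule rN(2)[OF zb_in]) (use zb_le \<epsilon>N in \<open>blast intro: order_trans\<close>)
    then obtain uN where uN: "uN \<in> cube" "zb N - C *v w = B *v uN"
      using w unfolding Z_set_def by blast
    have "\<forall>i\<in>{1..<N}. \<exists>u\<in>cube. B *v u = zb i"
    proof
      fix i assume i: "i \<in> {1..<N}"
      have "\<forall>a. \<bar>zb i $ a\<bar> \<le> rr i" using zb_le \<epsilon>i[OF i] by (blast intro: order_trans)
      from rr(2)[OF i zb_in this] show "\<exists>u\<in>cube. B *v u = zb i" by blast
    qed
    then obtain U where U: "\<And>i. i \<in> {1..<N} \<Longrightarrow> U i \<in> cube" "\<And>i. i \<in> {1..<N} \<Longrightarrow> B *v U i = zb i"
      by metis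
    define U' where "U' i = (if i = N then uN else U i)" for i
    have U'c: "U' i \<in> cube" if "i \<in> {1..N}" for i
      using that uN(1) U(1) by (cases "i = N") (auto simp: U'_def)
    define u where "u = (\<chi> j. U' (blkm j) $ j)"
    have "u \<in> cube"
    proof -
      have "\<bar>u $ j\<bar> \<le> 1" for j using U'c[OF inputs[rule_format, of j]] by (simp add: u_def cube_def)
      then show ?thesis by (simp add: cube_def)
    qed
    moreover have "B *v u + C *v w = z"
    proof -
      have "(B *v u) $ a + (C *v w) $ a = z $ a" for a
      proof -
        have ba: "blk a \<in> {1..N}" using blocks by auto
        have "(B *v u) $ a = (\<Sum>j\<in>UNIV. B $ a $ j * U' (blkm j) $ j)"
          by (simp add: matrix_vector_mult_def u_def)
        also have "\<dots> = (\<Sum>j\<in>UNIV. B $ a $ j * U' (blk a) $ j)"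
          by (rule sum.cong) (use B_diag in \<open>metis mult_zero_left\<close>)+
        also have "\<dots> = (B *v U' (blk a)) $ a" by (simp add: matrix_vector_mult_def)
        finally have Bu: "(B *v u) $ a = (B *v U' (blk a)) $ a" .
        show ?thesis
        proof (cases "blk a = N")
          case True
          then show ?thesis using Bu uN(2) by (simp add: U'_def zb_def Finite_Cartesian_Product.vec_eq_iff) (metis diff_add_cancel)
        next
          case False
          then have i: "blk a \<in> {1..<N}" using ba by auto
          have Cw: "(C *v w) $ a = 0" using C_N False by (simp add: matrix_vector_mult_def)
          show ?thesis using Bu U(2)[OF i] False Cw by (simp add: U'_def zb_def)
        qed
      qed
      then show ?thesis by (simp add: Finite_Cartesian_Product.vec_eq_iff)
    qed
    ultimately show ?thesis by blast
  qed
  with \<epsilon> show ?thesis by blast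
qed

lemma schur_nat:
  fixes Mc :: "nat \<Rightarrow> nat \<Rightarrow> complex" and n :: nat
  obtains P Q R where "\<forall>i<n. \<forall>j<n. (\<Sum>l<n. P i l * Q l j) = (if i = j then 1 else 0)"
     "\<forall>i<n. \<forall>j<n. (\<Sum>l<n. Q i l * P l j) = (if i = j then 1 else 0)"
     "\<forall>i<n. \<forall>j<n. (\<Sum>l<n. Mc i l * P l j) = (\<Sum>l<n. P i l * R l j)"
     "\<forall>i j. j < i \<longrightarrow> R i j = 0"
     "\<forall>i<n. \<exists>u. (\<exists>j<n. u j \<noteq> 0) \<and> (\<forall>i'<n. (\<Sum>j<n. Mc i' j * u j) = R i i * u i')"
proof -
  define A where "A = Matrix.mat n n (\<lambda>(i,j). Mc i j)"
  have A: "A \<in> carrier_mat n n" by (simp add: A_def)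
  obtain es where es: "char_poly A = (\<Prod>a\<leftarrow>es. [:- a, 1:])" "length es = n"
    using char_poly_factorized[OF A] by blast
  obtain B P Q where BPQ: "schur_decomposition A es = (B, P, Q)" by (cases "schur_decomposition A es") auto
  from schur_decomposition[OF A es(1) BPQ]
  have sim: "similar_mat_wit A B P Q" and ut: "upper_triangular B" and dg: "diag_mat B = es" by auto
  from sim A have carr: "B \<in> carrier_mat n n" "P \<in> carrier_mat n n" "Q \<in> carrier_mat n n"
    and PQ: "P * Q = 1\<^sub>m n" and QP: "Q * P = 1\<^sub>m n" and APBQ: "A = P * B * Q"
    unfolding similar_mat_wit_def Let_def by auto
  have AP: "A * P = P * B"
  proof -
    have "A * P = P * B * Q * P" by (simp add: APBQ)
    also have "\<dots> = P * B * (Q * P)" using carr by (simp add: assoc_mult_mat[of _ n n _ n _ n])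
    also have "\<dots> = P * B" using carr QP by simp
    finally show ?thesis .
  qed
  have mult_idx: "(X * Y) $$ (i, j) = (\<Sum>l<n. X $$ (i, l) * Y $$ (l, j))"
    if "X \<in> carrier_mat n n" "Y \<in> carrier_mat n n" "i < n" "j < n" for X Y :: "complex mat" and i j
    using that by (simp add: scalar_prod_def lessThan_atLeast0)
  define R where "R i j = (if i < n \<and> j < n then B $$ (i, j) else 0)" for i j
  have c1: "\<forall>i<n. \<forall>j<n. (\<Sum>l<n. P $$ (i, l) * Q $$ (l, j)) = (if i = j then 1 else 0)"
    using mult_idx[OF carr(2) carr(3)] PQ by simp
  have c2: "\<forall>i<n. \<forall>j<n. (\<Sum>l<n. Q $$ (i, l) * P $$ (l, j)) = (if i = j then 1 else 0)"
    using mult_idx[OF carr(3) carr(2)] QP by simp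
  have c3: "\<forall>i<n. \<forall>j<n. (\<Sum>l<n. Mc i l * P $$ (l, j)) = (\<Sum>l<n. P $$ (i, l) * R l j)"
  proof (intro allI impI)
    fix i j assume ij: "i < n" "j < n"
    have "(\<Sum>l<n. Mc i l * P $$ (l, j)) = (A * P) $$ (i, j)"
      using mult_idx[OF A carr(2) ij] ij by (simp add: A_def)
    also have "\<dots> = (P * B) $$ (i, j)" by (simp add: AP)
    also have "\<dots> = (\<Sum>l<n. P $$ (i, l) * R l j)"
      using mult_idx[OF carr(2) carr(1) ij] ij by (simp add: R_def)
    finally show "(\<Sum>l<n. Mc i l * P $$ (l, j)) = (\<Sum>l<n. P $$ (i, l) * R l j)" .
  qed
  have c4: "\<forall>i j. j < i \<longrightarrow> R i j = 0"
    using ut carr(1) by (auto simp: R_def upper_triangular_def)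
  have c5: "\<forall>i<n. \<exists>u. (\<exists>j<n. u j \<noteq> 0) \<and> (\<forall>i'<n. (\<Sum>j<n. Mc i' j * u j) = R i i * u i')"
  proof (intro allI impI)
    fix i assume i: "i < n"
    define e where "e = B $$ (i, i)"
    have "e \<in> set es" using dg i carr(1) unfolding diag_mat_def e_def by auto
    then have "poly (char_poly A) e = 0" unfolding es(1)
      by (induction es) auto
    then have "eigenvalue A e" using eigenvalue_root_char_poly[OF A] by simp
    then obtain v where v: "v \<in> carrier_vec n" "v \<noteq> 0\<^sub>v n" "A *\<^sub>v v = e \<cdot>\<^sub>v v"
      unfolding eigenvalue_def eigenvector_def using A by auto
    have "\<exists>j<n. vec_index v j \<noteq> 0"
    proof (rule ccontr)
      assume "\<not> ?thesis"
      then have "v = 0\<^sub>v n" using v(1) by (intro eq_vecI) auto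
      with v(2) show False by simp
    qed
    moreover have "(\<Sum>j<n. Mc i' j * vec_index v j) = R i i * vec_index v i'" if i': "i' < n" for i'
    proof -
      have "vec_index (A *\<^sub>v v) i' = (\<Sum>j<n. Mc i' j * vec_index v j)"
        using A v(1) i' by (simp add: A_def scalar_prod_def lessThan_atLeast0)
      also have "vec_index (A *\<^sub>v v) i' = e * vec_index v i'" using v i' by simp
      finally show ?thesis using i by (simp add: R_def e_def)
    qed
    ultimately show "\<exists>u. (\<exists>j<n. u j \<noteq> 0) \<and> (\<forall>i'<n. (\<Sum>j<n. Mc i' j * u j) = R i i * u i')"
      by (intro exI[of _ "\<lambda>j. vec_index v j"]) auto
  qed
  show ?thesis by (rule that[of "\<lambda>i l. P $$ (i,l)" "\<lambda>i l. Q $$ (i,l)" R, OF c1 c2 c3 c4 c5])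
qed

lemma has_integral_vec_comp:
  fixes f :: "real \<Rightarrow> real^'n"
  assumes "\<And>a. ((\<lambda>s. f s $ a) has_integral (I $ a)) S"
  shows "(f has_integral I) S"
  unfolding has_integral_componentwise_iff[of f I S]
  using assms by (auto simp: Basis_vec_def inner_axis)

lemma sum_swap_mult:
  fixes f h :: "nat \<Rightarrow> 'a::comm_semiring_1" and g :: "nat \<Rightarrow> nat \<Rightarrow> 'a"
  shows "(\<Sum>l<n. f l * (\<Sum>j<n. g l j * h j)) = (\<Sum>j<n. (\<Sum>l<n. f l * g l j) * h j)"
proof -
  have "(\<Sum>l<n. f l * (\<Sum>j<n. g l j * h j)) = (\<Sum>l<n. \<Sum>j<n. f l * g l j * h j)"
    by (simp add: sum_distrib_left mult.assoc)
  also have "\<dots> = (\<Sum>j<n. \<Sum>l<n. f l * g l j * h j)" by (rule sum.swap)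
  also have "\<dots> = (\<Sum>j<n. (\<Sum>l<n. f l * g l j) * h j)" by (simp add: sum_distrib_right)
  finally show ?thesis .
qed

lemma steer_real:
  fixes M :: "real^'n::finite^'n" and xi :: "real^'n"
  assumes noeig: "\<not> has_pos_re_eigenvalue M" and ep: "\<epsilon> > 0"
  shows "\<exists>(x::real \<Rightarrow> real^'n) (z::real \<Rightarrow> real^'n) (T::real). T \<ge> 0 \<and> x 0 = xi \<and>
     (\<forall>t\<ge>0. ((\<lambda>s. M *v x s + z s) has_integral (x t - xi)) {0..t}) \<and>
     (\<forall>s a. \<bar>z s $ a\<bar> \<le> \<epsilon>) \<and> x T = 0"
proof -
  define n where "n = CARD('n)"
  obtain \<iota> :: "nat \<Rightarrow> 'n" where bij: "bij_betw \<iota> {0..<n} UNIV"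
    using ex_bij_betw_nat_finite[of "UNIV :: 'n set"] unfolding n_def by auto
  define idx where "idx = inv_into {0..<n} \<iota>"
  have idx1: "\<iota> (idx a) = a" for a using bij unfolding idx_def
    by (meson UNIV_I bij_betw_inv_into_right)
  have idx2: "idx a < n" for a using bij unfolding idx_def
    by (metis UNIV_I atLeastLessThan_iff bij_betw_def inv_into_into)
  have idx3: "idx (\<iota> i) = i" if "i < n" for i using bij that unfolding idx_def
    by (simp add: bij_betw_inv_into_left)
  have reidx: "(\<Sum>b\<in>UNIV. g b) = (\<Sum>j<n. g (\<iota> j))" for g :: "'n \<Rightarrow> 'c::comm_monoid_add"
    using sum.reindex_bij_betw[OF bij, of g] by (simp add: lessThan_atLeast0)
  define Mc where "Mc i j = complex_of_real (M $ \<iota> i $ \<iota> j)" for i j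
  obtain P Q R where PQ: "\<forall>i<n. \<forall>j<n. (\<Sum>l<n. P i l * Q l j) = (if i = j then 1 else 0)"
    and QP: "\<forall>i<n. \<forall>j<n. (\<Sum>l<n. Q i l * P l j) = (if i = j then 1 else 0)"
    and MP: "\<forall>i<n. \<forall>j<n. (\<Sum>l<n. Mc i l * P l j) = (\<Sum>l<n. P i l * R l j)"
    and ut: "\<forall>i j. j < i \<longrightarrow> R i j = 0"
    and eig: "\<forall>i<n. \<exists>u. (\<exists>j<n. u j \<noteq> 0) \<and> (\<forall>i'<n. (\<Sum>j<n. Mc i' j * u j) = R i i * u i')"
    by (rule schur_nat[of n Mc])
  have re: "Re (R i i) \<le> 0" if i: "i < n" for i
  proof (rule ccontr)
    assume pos: "\<not> Re (R i i) \<le> 0"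
    obtain u where u: "\<exists>j<n. u j \<noteq> 0" "\<forall>i'<n. (\<Sum>j<n. Mc i' j * u j) = R i i * u i'"
      using eig i by blast
    define vv :: "complex^'n" where "vv = (\<chi> a. u (idx a))"
    have "vv \<noteq> 0"
    proof
      assume "vv = 0"
      obtain j where j: "j < n" "u j \<noteq> 0" using u(1) by blast
      have "vv $ \<iota> j = u j" using j by (simp add: vv_def idx3)
      with \<open>vv = 0\<close> j show False by simp
    qed
    moreover have "cmat M *v vv = R i i *s vv"
    proof -
      have "(cmat M *v vv) $ a = (R i i *s vv) $ a" for a
      proof -
        have "(cmat M *v vv) $ a = (\<Sum>b\<in>UNIV. complex_of_real (M $ a $ b) * u (idx b))"
          by (simp add: matrix_vector_mult_def cmat_def vv_def)
        also have "\<dots> = (\<Sum>j<n. Mc (idx a) j * u j)"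
          by (subst reidx) (simp add: Mc_def idx1 idx3)
        also have "\<dots> = R i i * u (idx a)" using u(2) idx2 by blast
        finally show ?thesis by (simp add: vv_def)
      qed
      then show ?thesis by (simp add: Finite_Cartesian_Product.vec_eq_iff)
    qed
    ultimately have "has_pos_re_eigenvalue M" using pos unfolding has_pos_re_eigenvalue_def by force
    with noeig show False by simp
  qed
  define Pb where "Pb = (\<Sum>i<n. \<Sum>l<n. cmod (P i l)) + 1"
  have Pb: "Pb \<ge> 1" unfolding Pb_def by (simp add: sum_nonneg)
  define \<delta> where "\<delta> = \<epsilon> / Pb"
  have dl: "\<delta> > 0" using ep Pb by (simp add: \<delta>_def)
  define y0 where "y0 l = (\<Sum>j<n. Q l j * complex_of_real (xi $ \<iota> j))" for l
  obtain y v :: "real \<Rightarrow> nat \<Rightarrow> complex" and T :: real where H2: "T \<ge> 0 \<and> (\<forall>i\<in>{0..<n}. y 0 i = y0 i) \<and>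
    (\<forall>i\<in>{0..<n}. \<forall>t\<ge>0. ((\<lambda>s. (\<Sum>j\<in>{0..<n}. R i j * y s j) + v s i) has_integral (y t i - y 0 i)) {0..t}) \<and>
    (\<forall>s i. cmod (v s i) \<le> \<delta>) \<and> (\<forall>t\<ge>T. \<forall>i\<in>{0..<n}. y t i = 0)"
    using tri_steer[of R n \<delta> 0 y0, OF ut[rule_format] re dl le0] by blast
  have T: "T \<ge> 0" using H2 by (elim conjE)
  have y0: "\<forall>i\<in>{0..<n}. y 0 i = y0 i" using H2 by (elim conjE)
  have yint: "\<forall>i\<in>{0..<n}. \<forall>t\<ge>0. ((\<lambda>s. (\<Sum>j\<in>{0..<n}. R i j * y s j) + v s i) has_integral (y t i - y 0 i)) {0..t}"
    using H2 by (elim conjE)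
  have vb: "\<forall>s i. cmod (v s i) \<le> \<delta>" using H2 by (elim conjE)
  have yz: "\<forall>t\<ge>T. \<forall>i\<in>{0..<n}. y t i = 0" using H2 by (elim conjE)
  define x where "x t = (\<chi> a. Re (\<Sum>l<n. P (idx a) l * y t l))" for t
  define z where "z t = (\<chi> a. Re (\<Sum>l<n. P (idx a) l * v t l))" for t
  have x0: "x 0 = xi"
  proof -
    have "(\<Sum>l<n. P i l * y 0 l) = complex_of_real (xi $ \<iota> i)" if i: "i < n" for i
    proof -
      have "(\<Sum>l<n. P i l * y 0 l) = (\<Sum>l<n. P i l * (\<Sum>j<n. Q l j * complex_of_real (xi $ \<iota> j)))"
        using y0 by (simp add: y0_def lessThan_atLeast0)
      also have "\<dots> = (\<Sum>j<n. (\<Sum>l<n. P i l * Q l j) * complex_of_real (xi $ \<iota> j))"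
        by (rule sum_swap_mult)
      also have "\<dots> = (\<Sum>j<n. (if i = j then 1 else 0) * complex_of_real (xi $ \<iota> j))"
        using PQ i by (intro sum.cong) auto
      also have "\<dots> = (\<Sum>j<n. if i = j then complex_of_real (xi $ \<iota> j) else 0)"
        by (rule sum.cong) auto
      also have "\<dots> = complex_of_real (xi $ \<iota> i)" using i by (simp add: sum.delta)
      finally show ?thesis .
    qed
    then show ?thesis using idx1 idx2 by (simp add: x_def Finite_Cartesian_Product.vec_eq_iff)
  qed
  have xT: "x T = 0" using yz T by (simp add: x_def Finite_Cartesian_Product.vec_eq_iff lessThan_atLeast0)
  have zb: "\<bar>z s $ a\<bar> \<le> \<epsilon>" for s a
  proof -
    let ?i = "idx a"
    have "\<bar>z s $ a\<bar> \<le> cmod (\<Sum>l<n. P ?i l * v s l)"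
      unfolding z_def vec_lambda_beta by (rule abs_Re_le_cmod)
    also have "\<dots> \<le> (\<Sum>l<n. cmod (P ?i l) * \<delta>)"
      by (rule order_trans[OF norm_sum sum_mono]) (use vb in \<open>auto simp: norm_mult intro: mult_left_mono\<close>)
    also have "\<dots> = (\<Sum>l<n. cmod (P ?i l)) * \<delta>" by (simp add: sum_distrib_right)
    also have "\<dots> \<le> Pb * \<delta>"
    proof (rule mult_right_mono)
      have "(\<Sum>l<n. cmod (P ?i l)) \<le> (\<Sum>i<n. \<Sum>l<n. cmod (P i l))"
        by (rule member_le_sum[of ?i "{..<n}" "\<lambda>i. \<Sum>l<n. cmod (P i l)"]) (use idx2 in \<open>auto intro: sum_nonneg\<close>)
      then show "(\<Sum>l<n. cmod (P ?i l)) \<le> Pb" by (simp add: Pb_def)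
    qed (use dl in simp)
    also have "\<dots> = \<epsilon>" using Pb by (simp add: \<delta>_def)
    finally show ?thesis .
  qed
  have xint: "((\<lambda>s. M *v x s + z s) has_integral (x t - xi)) {0..t}" if t: "t \<ge> 0" for t
  proof (rule has_integral_vec_comp)
    fix a
    let ?i = "idx a"
    have comp: "(M *v x s + z s) $ a = Re (\<Sum>m<n. P ?i m * ((\<Sum>l<n. R m l * y s l) + v s m))" for s
    proof -
      have "(M *v x s) $ a = (\<Sum>b\<in>UNIV. M $ a $ b * Re (\<Sum>l<n. P (idx b) l * y s l))"
        by (simp add: matrix_vector_mult_def x_def)
      also have "\<dots> = Re (\<Sum>b\<in>UNIV. complex_of_real (M $ a $ b) * (\<Sum>l<n. P (idx b) l * y s l))"
        by (simp add: Re_sum)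
      also have "\<dots> = Re (\<Sum>j<n. Mc ?i j * (\<Sum>l<n. P j l * y s l))"
        by (subst reidx) (simp add: Mc_def idx1 idx3)
      also have "\<dots> = Re (\<Sum>l<n. (\<Sum>j<n. Mc ?i j * P j l) * y s l)"
        by (simp only: sum_swap_mult)
      also have "\<dots> = Re (\<Sum>l<n. (\<Sum>m<n. P ?i m * R m l) * y s l)"
        using MP idx2 by simp
      also have "\<dots> = Re (\<Sum>m<n. P ?i m * (\<Sum>l<n. R m l * y s l))"
        by (simp only: sum_swap_mult)
      finally have "(M *v x s) $ a = Re (\<Sum>m<n. P ?i m * (\<Sum>l<n. R m l * y s l))" .
      then show ?thesis by (simp add: z_def algebra_simps sum.distrib)
    qed
    have "((\<lambda>s. \<Sum>m<n. P ?i m * ((\<Sum>l<n. R m l * y s l) + v s m)) has_integral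
            (\<Sum>m<n. P ?i m * (y t m - y 0 m))) {0..t}"
      by (intro has_integral_sum has_integral_mult_right) (use yint t in \<open>auto simp: lessThan_atLeast0\<close>)
    from has_integral_linear[OF this bounded_linear_Re]
    have "((\<lambda>s. Re (\<Sum>m<n. P ?i m * ((\<Sum>l<n. R m l * y s l) + v s m))) has_integral Re (\<Sum>m<n. P ?i m * (y t m - y 0 m))) {0..t}"
      by (simp only: o_def)
    then have "((\<lambda>s. (M *v x s + z s) $ a) has_integral Re (\<Sum>m<n. P ?i m * (y t m - y 0 m))) {0..t}"
      by (rule has_integral_eq[rotated]) (simp only: comp)
    moreover have "Re (\<Sum>m<n. P ?i m * (y t m - y 0 m)) = (x t - xi) $ a"
    proof -
      have "(\<Sum>m<n. P ?i m * (y t m - y 0 m)) = (\<Sum>m<n. P ?i m * y t m) - (\<Sum>m<n. P ?i m * y 0 m)"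
        by (simp only: right_diff_distrib sum_subtractf)
      then have "Re (\<Sum>m<n. P ?i m * (y t m - y 0 m)) = Re (\<Sum>m<n. P ?i m * y t m) - Re (\<Sum>m<n. P ?i m * y 0 m)"
        by (simp only: minus_complex.sel)
      also have "\<dots> = x t $ a - x 0 $ a" by (simp only: x_def vec_lambda_beta)
      finally show ?thesis using x0 by simp
    qed
    ultimately show "((\<lambda>s. (M *v x s + z s) $ a) has_integral (x t - xi) $ a) {0..t}" by simp
  qed
  show ?thesis using T x0 xint zb xT by blast
qed

theorem proposition5:
  fixes N :: nat
    and blk :: "'n::finite \<Rightarrow> nat"
    and blkm :: "'m::finite \<Rightarrow> nat"
    and A D :: "real^'n^'n"
    and B :: "real^'m^'n"
    and C :: "real^'p::finite^'n"
  assumes blocks: "range blk = {1..N}"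
    and inputs: "\<forall>j. blkm j \<in> {1..N}"
    and A_diag: "\<forall>i k. blk i \<noteq> blk k \<longrightarrow> A $ i $ k = 0"
    and D_offdiag: "\<forall>i k. blk i = blk k \<longrightarrow> D $ i $ k = 0"
    and D_nz: "D \<noteq> 0"
    and B_diag: "\<forall>i j. blk i \<noteq> blkm j \<longrightarrow> B $ i $ j = 0"
    and C_N: "\<forall>i j. blk i \<noteq> N \<longrightarrow> C $ i $ j = 0"
    and rank: "\<forall>i\<in>{1..<N}. dim {column j B | j. blkm j = i} = card {k. blk k = i}"
    and Z_int: "(top_of_set (block_subspace blk N)) interior_of (Z_set B C blkm N) \<noteq> {}"
    and small: "mnorm D < real_stab_radius A"
  shows "resiliently_stabilizable (A + D) B C cube cube"
proof -
  have noeig: "\<not> has_pos_re_eigenvalue (A + D)"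
  proof
    assume h: "has_pos_re_eigenvalue (A + D)"
    have mem: "mnorm D \<in> {mnorm D' | D'. has_pos_re_eigenvalue (A + D')}" using h by blast
    have bdd: "bdd_below {mnorm D' | D'. has_pos_re_eigenvalue (A + D')}"
      by (rule bdd_belowI[of _ 0]) (auto simp: mnorm_def intro: onorm_pos_le)
    have "real_stab_radius A \<le> mnorm D"
      unfolding real_stab_radius_def by (rule cInf_lower[OF mem bdd])
    with small show False by simp
  qed
  obtain \<epsilon> where ep: "\<epsilon> > 0"
    and adm: "\<And>z::real^'n. (\<forall>a. \<bar>z $ a\<bar> \<le> \<epsilon>) \<Longrightarrow> (\<forall>w\<in>cube. \<exists>u\<in>cube. B *v u + C *v w = z)"
    using admissible[OF blocks inputs B_diag C_N rank Z_int] by blast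
  show ?thesis unfolding resiliently_stabilizable_def
  proof (intro allI)
    fix x0 :: "real^'n"
    obtain x z :: "real \<Rightarrow> real^'n" and T :: real where T: "T \<ge> 0" and x0: "x 0 = x0"
      and xint: "\<forall>t\<ge>0. ((\<lambda>s. (A + D) *v x s + z s) has_integral (x t - x0)) {0..t}"
      and zb: "\<forall>s a. \<bar>z s $ a\<bar> \<le> \<epsilon>" and xT: "x T = 0"
      using steer_real[OF noeig ep, where xi=x0] by blast
    define kappa where "kappa t v = (SOME u. u \<in> cube \<and> B *v u + C *v v = z t)" for t v
    have kap: "kappa t v \<in> cube \<and> B *v kappa t v + C *v v = z t" if v: "v \<in> cube" for t v
    proof -
      have "\<exists>u. u \<in> cube \<and> B *v u + C *v v = z t" using adm[of "z t"] zb v by blast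
      then show ?thesis unfolding kappa_def by (rule someI_ex)
    qed
    have integrand: "(A + D) *v y s + B *v kappa s (w s) + C *v w s = (A + D) *v y s + z s"
      if "w s \<in> cube" for y w s
      using kap[OF that] by (simp add: add.assoc)
    show "\<exists>kappa :: real \<Rightarrow> real^'p \<Rightarrow> real^'m. (\<forall>t\<ge>0. \<forall>v\<in>cube. kappa t v \<in> cube) \<and>
        (\<forall>w. (\<forall>t\<ge>0. w t \<in> cube) \<longrightarrow>
           (\<exists>T\<ge>0. \<exists>x. ode_solution (A + D) B C (\<lambda>t. kappa t (w t)) w x0 x \<and>
                 (\<forall>y. ode_solution (A + D) B C (\<lambda>t. kappa t (w t)) w x0 y \<longrightarrow> (\<forall>t\<ge>0. y t = x t)) \<and>
                 x T = 0))"
    proof (rule exI[of _ kappa], intro conjI allI impI ballI)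
      show "kappa t v \<in> cube" if "t \<ge> 0" "v \<in> cube" for t v using kap that by blast
    next
      fix w :: "real \<Rightarrow> real^'p" assume w: "\<forall>t\<ge>0. w t \<in> cube"
      have sol_iff: "ode_solution (A + D) B C (\<lambda>t. kappa t (w t)) w x0 y \<longleftrightarrow>
          y 0 = x0 \<and> (\<forall>t\<ge>0. ((\<lambda>s. (A + D) *v y s + z s) has_integral (y t - x0)) {0..t})" for y
      proof -
        have "((\<lambda>s. (A + D) *v y s + B *v kappa s (w s) + C *v w s) has_integral (y t - x0)) {0..t} \<longleftrightarrow>
              ((\<lambda>s. (A + D) *v y s + z s) has_integral (y t - x0)) {0..t}" for t
          by (rule has_integral_cong) (use w integrand in auto)
        then show ?thesis unfolding ode_solution_def by simp
      qed
      show "\<exists>T\<ge>0. \<exists>x. ode_solution (A + D) B C (\<lambda>t. kappa t (w t)) w x0 x \<and>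
                 (\<forall>y. ode_solution (A + D) B C (\<lambda>t. kappa t (w t)) w x0 y \<longrightarrow> (\<forall>t\<ge>0. y t = x t)) \<and>
                 x T = 0"
      proof -
        have solx: "ode_solution (A + D) B C (\<lambda>t. kappa t (w t)) w x0 x" using sol_iff x0 xint by blast
        have uniq: "\<forall>y. ode_solution (A + D) B C (\<lambda>t. kappa t (w t)) w x0 y \<longrightarrow> (\<forall>t\<ge>0. y t = x t)"
        proof (intro allI impI)
          fix y and t :: real assume y: "ode_solution (A + D) B C (\<lambda>t. kappa t (w t)) w x0 y" and t: "0 \<le> t"
          have yint: "\<forall>t\<ge>0. ((\<lambda>s. (A + D) *v y s + z s) has_integral (y t - x0)) {0..t}"
            using y sol_iff by blast
          have "\<forall>t\<ge>0. ((\<lambda>s. (A + D) *v (y s - x s)) has_integral (y t - x t)) {0..t}"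
          proof (intro allI impI)
            fix t :: real assume t: "t \<ge> 0"
            from has_integral_diff[OF yint[rule_format, OF t] xint[rule_format, OF t]]
            show "((\<lambda>s. (A + D) *v (y s - x s)) has_integral (y t - x t)) {0..t}"
              by (simp add: matrix_vector_mult_diff_distrib)
          qed
          from gronwall_zero[OF this] t show "y t = x t" by simp
        qed
        show ?thesis using T solx uniq xT by blast
      qed
    qed
  qed
qed

end
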